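(* Let $E$ be a real topological vector space, $\Omega$ a nonempty open subset of $E$, and $f_0,\dots,f_m:\Omega\to\mathbb{R}$. Let $\hat{x}$ be a solution of the problem $(\mathcal{P}_1)$: maximize $f_0(x)$ subject to $x\in\Omega$ and $f_i(x)\ge0$ for all $i\in\{1,\dots,m\}$. Assume that $f_j$ is lower semicontinuous at $\hat{x}$ for every $j\in\{1,\dots,m\}$ with $f_j(\hat{x})>0$, that each $f_i$ ($0\le i\le m$) is $D^-_M$-differentiable at $\hat{x}$, and that, after reindexing, $\{i\in\{1,\dots,m\}:f_i(\hat{x})=0\}=\{1,\dots,l\}$ with $l\ge1$. For $p\in\{0,\dots,l\}$ let $A_p=\{u\in E: D^-_Mf_i(\hat{x})(u)>0\ \text{for all } i\in\{p,\dots,l\}\}$. If $A_l\neq\emptyset$, then $A_0=\emptyset$; equivalently, $k:=\min\{i\in\{0,\dots,l\}:A_i\neq\emptyset\}$ satisfies $k\ge1$.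
   Context: $D^-f(x)(u):=\liminf_{t\to0^+}\frac{f(x+tu)-f(x)}{t}$ (with $D^-f(x)(0)=0$); $D^-_Mf(x)(u):=\inf_{w\in E}\{D^-f(x)(u+w)-D^-f(x)(w)\}$; $f$ is $D^-_M$-differentiable at $x$ if both are finite for every $u\in E$. *)

theory Defs
  imports "HOL-Analysis.Analysis"
begin

class real_tvs = real_vector + topological_space +
  assumes tvs_add_continuous:
    "\<And>U a b. open U \<Longrightarrow> a + b \<in> U \<Longrightarrow>
       \<exists>V W. open V \<and> open W \<and> a \<in> V \<and> b \<in> W \<and> (\<forall>y\<in>V. \<forall>z\<in>W. y + z \<in> U)"
  assumes tvs_scaleR_continuous:
    "\<And>U r a. open U \<Longrightarrow> r *\<^sub>R a \<in> U \<Longrightarrow>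
       \<exists>e>0. \<exists>W. open W \<and> a \<in> W \<and> (\<forall>s. \<bar>s - r\<bar> < e \<longrightarrow> (\<forall>y\<in>W. s *\<^sub>R y \<in> U))"

definition lsc_at :: "('a::topological_space \<Rightarrow> real) \<Rightarrow> 'a \<Rightarrow> bool" where
  "lsc_at f x \<longleftrightarrow> (\<forall>e>0. \<forall>\<^sub>F y in nhds x. f x - e < f y)"

definition dini_lower :: "('a::real_vector \<Rightarrow> real) \<Rightarrow> 'a \<Rightarrow> 'a \<Rightarrow> ereal" where
  "dini_lower f x u =
     (if u = 0 then 0
      else Liminf (at_right (0::real)) (\<lambda>t. ereal ((f (x + t *\<^sub>R u) - f x) / t)))"

definition dini_M :: "('a::real_vector \<Rightarrow> real) \<Rightarrow> 'a \<Rightarrow> 'a \<Rightarrow> ereal" where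
  "dini_M f x u = (INF w. dini_lower f x (u + w) - dini_lower f x w)"

definition dini_M_differentiable :: "('a::real_vector \<Rightarrow> real) \<Rightarrow> 'a \<Rightarrow> bool" where
  "dini_M_differentiable f x \<longleftrightarrow>
     (\<forall>u. \<bar>dini_lower f x u\<bar> \<noteq> \<infinity> \<and> \<bar>dini_M f x u\<bar> \<noteq> \<infinity>)"

end

theory Submission
  imports Defs
begin

lemma tvs_path_nhds:
  fixes xh u :: "'a::real_tvs"
  assumes "open U" "xh \<in> U"
  shows "\<forall>\<^sub>F t in at_right (0::real). xh + t *\<^sub>R u \<in> U"
proof -
  from tvs_add_continuous[OF assms(1), of xh 0] assms(2)
  obtain V W where VW: "open V" "open W" "xh \<in> V" "0 \<in> W" "\<forall>y\<in>V. \<forall>z\<in>W. y + z \<in> U"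
    by auto
  from tvs_scaleR_continuous[OF VW(2), of 0 u] VW(4)
  obtain e W' where e: "e > 0" "u \<in> W'" "\<forall>s. \<bar>s - 0\<bar> < e \<longrightarrow> (\<forall>y\<in>W'. s *\<^sub>R y \<in> W)"
    by auto
  show ?thesis unfolding eventually_at_right_field
    using e VW by (intro exI[of _ e]) auto
qed

lemma dini_pos:
  fixes f :: "'a::real_tvs \<Rightarrow> real"
  assumes "dini_M f x u > 0"
  shows "\<forall>\<^sub>F t in at_right (0::real). f (x + t *\<^sub>R u) > f x"
proof -
  have "dini_M f x u \<le> dini_lower f x (u + 0) - dini_lower f x 0"
    unfolding dini_M_def by (rule INF_lower) simp
  hence le: "dini_M f x u \<le> dini_lower f x u" by (simp add: dini_lower_def)
  hence pos: "0 < dini_lower f x u" using assms by simp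
  hence "u \<noteq> 0" by (auto simp: dini_lower_def)
  hence "0 < Liminf (at_right (0::real)) (\<lambda>t. ereal ((f (x + t *\<^sub>R u) - f x) / t))"
    using pos by (simp add: dini_lower_def)
  from less_LiminfD[OF this]
  have "\<forall>\<^sub>F t in at_right (0::real). 0 < (f (x + t *\<^sub>R u) - f x) / t" by simp
  thus ?thesis using eventually_at_right_less[of "0::real"]
    by eventually_elim (simp add: zero_less_divide_iff)
qed

theorem lemma3p7:
  fixes f :: "nat \<Rightarrow> 'a::real_tvs \<Rightarrow> real"
    and \<Omega> :: "'a set" and xh :: 'a and m l :: nat
    and A :: "nat \<Rightarrow> 'a set"
  assumes "open \<Omega>" and "\<Omega> \<noteq> {}"
    and sol_feas: "xh \<in> \<Omega>" "\<forall>i\<in>{1..m}. f i xh \<ge> 0"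
    and sol_max: "\<forall>x\<in>\<Omega>. (\<forall>i\<in>{1..m}. f i x \<ge> 0) \<longrightarrow> f 0 x \<le> f 0 xh"
    and lsc: "\<forall>j\<in>{1..m}. f j xh > 0 \<longrightarrow> lsc_at (f j) xh"
    and diff: "\<forall>i\<in>{0..m}. dini_M_differentiable (f i) xh"
    and active: "{i\<in>{1..m}. f i xh = 0} = {1..l}" and "l \<ge> 1"
    and A_def: "\<forall>p\<in>{0..l}. A p = {u. \<forall>i\<in>{p..l}. dini_M (f i) xh u > 0}"
    and "A l \<noteq> {}"
  shows "A 0 = {}"
proof (rule ccontr)
  assume "A 0 \<noteq> {}"
  then obtain u where "u \<in> A 0" by auto
  hence u: "\<forall>i\<in>{0..l}. dini_M (f i) xh u > 0" using A_def by auto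
  have "l \<in> {i\<in>{1..m}. f i xh = 0}" unfolding active using \<open>l \<ge> 1\<close> by simp
  hence lm: "l \<le> m" by simp
  have ev1: "\<forall>\<^sub>F t in at_right (0::real). \<forall>i\<in>{0..l}. f i (xh + t *\<^sub>R u) > f i xh"
    using u by (intro eventually_ball_finite) (auto intro: dini_pos)
  have ev2: "\<forall>\<^sub>F t in at_right (0::real). \<forall>i\<in>{l<..m}. f i (xh + t *\<^sub>R u) > 0"
  proof (intro eventually_ball_finite ballI)
    fix i assume i: "i \<in> {l<..m}"
    hence i1: "i \<in> {1..m}" using \<open>l \<ge> 1\<close> by auto
    have "f i xh \<noteq> 0"
    proof
      assume "f i xh = 0"
      hence "i \<in> {i\<in>{1..m}. f i xh = 0}" using i1 by simp
      hence "i \<in> {1..l}" unfolding active .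
      thus False using i by simp
    qed
    hence p: "f i xh > 0" using sol_feas(2) i1 by force
    hence "lsc_at (f i) xh" using lsc i1 by auto
    hence "\<forall>\<^sub>F y in nhds xh. f i xh - f i xh < f i y" using p unfolding lsc_at_def by blast
    then obtain U where "open U" "xh \<in> U" "\<forall>y\<in>U. 0 < f i y"
      unfolding eventually_nhds by auto
    thus "\<forall>\<^sub>F t in at_right (0::real). f i (xh + t *\<^sub>R u) > 0"
      using tvs_path_nhds[of U xh u] by (auto elim: eventually_mono)
  qed simp
  have ev3: "\<forall>\<^sub>F t in at_right (0::real). xh + t *\<^sub>R u \<in> \<Omega>"
    using tvs_path_nhds[OF \<open>open \<Omega>\<close> sol_feas(1)] .
  have "\<forall>\<^sub>F t in at_right (0::real). False"
    using ev1 ev2 ev3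
  proof eventually_elim
    case (elim t)
    let ?y = "xh + t *\<^sub>R u"
    have "\<forall>i\<in>{1..m}. f i ?y \<ge> 0"
    proof
      fix i assume i: "i \<in> {1..m}"
      show "f i ?y \<ge> 0"
      proof (cases "i \<le> l")
        case True
        hence "i \<in> {1..l}" using i by simp
        hence "i \<in> {i\<in>{1..m}. f i xh = 0}" unfolding active .
        hence "f i xh = 0" by simp
        moreover have "f i xh < f i ?y" using elim(1) True by simp
        ultimately show ?thesis by simp
      next
        case False hence "i \<in> {l<..m}" using i by simp
        thus ?thesis using elim(2) by fastforce
      qed
    qed
    hence "f 0 ?y \<le> f 0 xh" using sol_max elim(3) by auto
    moreover have "f 0 ?y > f 0 xh" using elim(1) by auto
    ultimately show False by simp
  qed
  thus False by simp
qed

end
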